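(* Let $R$ be a unital ring and let $S\subseteq R$ be a subset with $0,1\in S$ such that $S$ is an inverse monoid under the multiplication of $R$. Then there is a subset $T$ with $S\subseteq T\subseteq R$ such that $T$, under the multiplication of $R$, is a Boolean inverse monoid.
   Context: An inverse monoid is a monoid in which each $s$ has a unique $s^{-1}$ with $s=ss^{-1}s$, $s^{-1}=s^{-1}ss^{-1}$; natural partial order $s\le t$ iff $s=ts^{-1}s$; $a,b$ compatible if $a^{-1}b,ab^{-1}$ are idempotents. A Boolean inverse monoid is an inverse monoid with zero in which every finite compatible subset has a join with respect to $\le$, multiplication distributes over such joins, and the idempotents form a Boolean algebra. *)

theory Defs
  imports Main
begin

definition is_inverse_monoid :: "'a::monoid_mult set \<Rightarrow> bool" where
  "is_inverse_monoid T \<longleftrightarrow>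
     1 \<in> T \<and> (\<forall>x\<in>T. \<forall>y\<in>T. x * y \<in> T) \<and>
     (\<forall>s\<in>T. \<exists>!t. t \<in> T \<and> s = s * t * s \<and> t = t * s * t)"

definition inv_in :: "'a::monoid_mult set \<Rightarrow> 'a \<Rightarrow> 'a" where
  "inv_in T s = (THE t. t \<in> T \<and> s = s * t * s \<and> t = t * s * t)"

definition nat_le :: "'a::monoid_mult set \<Rightarrow> 'a \<Rightarrow> 'a \<Rightarrow> bool" where
  "nat_le T s t \<longleftrightarrow> s = t * inv_in T s * s"

definition idem :: "'a::monoid_mult \<Rightarrow> bool" where
  "idem e \<longleftrightarrow> e * e = e"

definition compatible :: "'a::monoid_mult set \<Rightarrow> 'a \<Rightarrow> 'a \<Rightarrow> bool" where
  "compatible T a b \<longleftrightarrow> idem (inv_in T a * b) \<and> idem (a * inv_in T b)"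

definition is_lub_in :: "'a::monoid_mult set \<Rightarrow> 'a set \<Rightarrow> 'a set \<Rightarrow> 'a \<Rightarrow> bool" where
  "is_lub_in T C X j \<longleftrightarrow> j \<in> C \<and> (\<forall>x\<in>X. nat_le T x j) \<and>
     (\<forall>u\<in>C. (\<forall>x\<in>X. nat_le T x u) \<longrightarrow> nat_le T j u)"

definition is_glb_in :: "'a::monoid_mult set \<Rightarrow> 'a set \<Rightarrow> 'a set \<Rightarrow> 'a \<Rightarrow> bool" where
  "is_glb_in T C X m \<longleftrightarrow> m \<in> C \<and> (\<forall>x\<in>X. nat_le T m x) \<and>
     (\<forall>u\<in>C. (\<forall>x\<in>X. nat_le T u x) \<longrightarrow> nat_le T u m)"

definition idems :: "'a::monoid_mult set \<Rightarrow> 'a set" where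
  "idems T = {e \<in> T. idem e}"

definition idems_boolean_algebra :: "'a::monoid_mult set \<Rightarrow> bool" where
  "idems_boolean_algebra T \<longleftrightarrow>
     (let E = idems T;
          J = (\<lambda>e f. THE j. is_lub_in T E {e, f} j);
          M = (\<lambda>e f. THE m. is_glb_in T E {e, f} m)
      in (\<forall>e\<in>E. \<forall>f\<in>E. (\<exists>j. is_lub_in T E {e, f} j) \<and> (\<exists>m. is_glb_in T E {e, f} m)) \<and>
         (\<forall>e\<in>E. \<forall>f\<in>E. \<forall>g\<in>E. M e (J f g) = J (M e f) (M e g)) \<and>
         (\<exists>bot\<in>E. \<exists>top\<in>E. (\<forall>e\<in>E. nat_le T bot e \<and> nat_le T e top) \<and>
            (\<forall>e\<in>E. \<exists>c\<in>E. M e c = bot \<and> J e c = top)))"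

definition is_boolean_inverse_monoid :: "'a::monoid_mult set \<Rightarrow> bool" where
  "is_boolean_inverse_monoid T \<longleftrightarrow>
     is_inverse_monoid T \<and>
     (\<exists>z\<in>T. \<forall>x\<in>T. z * x = z \<and> x * z = z) \<and>
     (\<forall>A. finite A \<and> A \<subseteq> T \<and> (\<forall>a\<in>A. \<forall>b\<in>A. compatible T a b) \<longrightarrow>
        (\<exists>j. is_lub_in T T A j) \<and>
        (\<forall>j s. is_lub_in T T A j \<and> s \<in> T \<longrightarrow>
           is_lub_in T T ((\<lambda>a. s * a) ` A) (s * j) \<and>
           is_lub_in T T ((\<lambda>a. a * s) ` A) (j * s))) \<and>
     idems_boolean_algebra T"

end

theory Submission imports Defs begin

inductive_set Cset :: "'a::ring_1 set \<Rightarrow> 'a set" for S where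
  gen: "e \<in> S \<Longrightarrow> e * e = e \<Longrightarrow> e \<in> Cset S"
| add: "x \<in> Cset S \<Longrightarrow> y \<in> Cset S \<Longrightarrow> x + y \<in> Cset S"
| neg: "x \<in> Cset S \<Longrightarrow> - x \<in> Cset S"
| mul: "x \<in> Cset S \<Longrightarrow> y \<in> Cset S \<Longrightarrow> x * y \<in> Cset S"

locale IM =
  fixes S :: "'a::ring_1 set"
  assumes zS: "0 \<in> S" and oS: "1 \<in> S" and imS: "is_inverse_monoid S"
begin

abbreviation i where "i \<equiv> inv_in S"

lemma mulS: "x \<in> S \<Longrightarrow> y \<in> S \<Longrightarrow> x * y \<in> S"
  using imS unfolding is_inverse_monoid_def by blast

lemma invS: assumes "s \<in> S" shows "i s \<in> S" "s * i s * s = s" "i s * s * i s = i s"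
proof -
  have "\<exists>!t. t \<in> S \<and> s = s * t * s \<and> t = t * s * t" using imS assms unfolding is_inverse_monoid_def by blast
  from theI'[OF this] show "i s \<in> S" "s * i s * s = s" "i s * s * i s = i s"
    unfolding inv_in_def by auto
qed

lemma invS_unique: assumes "s \<in> S" "t \<in> S" "s * t * s = s" "t * s * t = t" shows "i s = t"
proof -
  have "\<exists>!t. t \<in> S \<and> s = s * t * s \<and> t = t * s * t" using imS assms unfolding is_inverse_monoid_def by blast
  from the1_equality[OF this] assms show ?thesis unfolding inv_in_def by auto
qed

lemma idem_prod_S: assumes e: "e \<in> S" "e * e = e" and f: "f \<in> S" "f * f = f"
  shows "e * f * (e * f) = e * f"
proof -
  define x where "x = i (e * f)"
  have ef: "e * f \<in> S" using mulS e f by auto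
  have xS: "x \<in> S" and x1: "e * f * x * (e * f) = e * f" and x2: "x * (e * f) * x = x"
    using invS[OF ef] x_def by auto
  have ee: "e * (e * z) = e * z" and ff: "f * (f * z) = f * z" for z
    using e f by (simp_all flip: mult.assoc)
  define y where "y = f * x * e"
  have yS: "y \<in> S" using mulS xS e f y_def by auto
  have "e * f * y * (e * f) = e * f * x * (e * f)"
    unfolding y_def by (simp add: mult.assoc ee ff)
  hence y1: "e * f * y * (e * f) = e * f" using x1 by simp
  have "y * (e * f) * y = f * (x * (e * f) * x) * e"
    unfolding y_def by (simp add: mult.assoc ee ff)
  hence y2: "y * (e * f) * y = y" using x2 y_def by simp
  have xy: "x = y" using invS_unique[OF ef yS y1 y2] x_def by simp
  have "x * x = y * y" using xy by simp
  also have "\<dots> = f * (x * (e * f) * x) * e" unfolding y_def by (simp add: mult.assoc)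
  also have "\<dots> = y" using x2 y_def by simp
  finally have xx: "x * x = x" using xy by simp
  have "i x = x" using invS_unique[OF xS xS] xx by simp
  moreover have "i x = e * f" using invS_unique[OF xS ef] x1 x2 by (simp add: mult.assoc)
  ultimately have "e * f = x" by simp
  thus ?thesis using xx by simp
qed

lemma idem_comm_S: assumes e: "e \<in> S" "e * e = e" and f: "f \<in> S" "f * f = f"
  shows "e * f = f * e"
proof -
  have ef: "e * f \<in> S" "f * e \<in> S" using mulS e f by auto
  have i1: "e * f * (e * f) = e * f" using idem_prod_S e f by blast
  have i2: "f * e * (f * e) = f * e" using idem_prod_S e f by blast
  have "i (e * f) = e * f" using invS_unique[OF ef(1) ef(1)] i1 by simp
  moreover have "i (e * f) = f * e"
  proof (rule invS_unique[OF ef])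
    show "e * f * (f * e) * (e * f) = e * f"
      by (metis i1 e(2) f(2) mult.assoc)
    show "f * e * (e * f) * (f * e) = f * e"
      by (metis i2 e(2) f(2) mult.assoc)
  qed
  ultimately show ?thesis by simp
qed


lemma ii: "s \<in> S \<Longrightarrow> i (i s) = s"
  using invS_unique[of "i s" s] invS by (simp add: mult.assoc)

lemma domS: assumes s: "s \<in> S"
  shows "i s * s \<in> S" "s * i s \<in> S" "i s * s * (i s * s) = i s * s" "s * i s * (s * i s) = s * i s"
    "i s * s \<in> Cset S" "s * i s \<in> Cset S"
proof -
  show 1: "i s * s \<in> S" "s * i s \<in> S" using mulS invS[OF s] s by auto
  have "i s * s * (i s * s) = (i s * s * i s) * s" by (simp add: mult.assoc)
  thus 2: "i s * s * (i s * s) = i s * s" using invS[OF s] by simp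
  have "s * i s * (s * i s) = (s * i s * s) * i s" by (simp add: mult.assoc)
  thus 3: "s * i s * (s * i s) = s * i s" using invS[OF s] by simp
  show "i s * s \<in> Cset S" "s * i s \<in> Cset S" using 1 2 3 Cset.gen by auto
qed

lemma C_comm_gen: assumes e: "e \<in> S" "e * e = e" and y: "y \<in> Cset S"
  shows "e * y = y * e"
  using y
proof induction
  case (gen f) thus ?case using idem_comm_S e by blast
next
  case (add x y) thus ?case by (simp add: algebra_simps)
next
  case (neg x) thus ?case by simp
next
  case (mul x y) thus ?case by (metis mult.assoc)
qed

lemma C_comm: assumes x: "x \<in> Cset S" and y: "y \<in> Cset S" shows "x * y = y * x"
  using x
proof induction
  case (gen f) thus ?case using C_comm_gen y by blast
next
  case (add x1 x2) thus ?case by (simp add: algebra_simps)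
next
  case (neg x) thus ?case by simp
next
  case (mul x1 x2) thus ?case by (metis mult.assoc)
qed

lemma C0: "0 \<in> Cset S" using Cset.gen[OF zS] by simp
lemma C1: "1 \<in> Cset S" using Cset.gen[OF oS] by simp
lemma Cdiff: "x \<in> Cset S \<Longrightarrow> y \<in> Cset S \<Longrightarrow> x - y \<in> Cset S"
  using Cset.add Cset.neg by (metis diff_conv_add_uminus)

lemma C_conj: assumes s: "s \<in> S" and c: "c \<in> Cset S" shows "s * c * i s \<in> Cset S"
  using c
proof induction
  case (gen e)
  have d: "i s * s \<in> S" "i s * s * (i s * s) = i s * s"
    using domS[OF s] by auto
  have com: "e * (i s * s) = i s * s * e" using idem_comm_S[OF gen d] .
  have "s * e * i s \<in> S" using mulS invS s gen by auto
  moreover have "s * e * i s * (s * e * i s) = s * e * i s"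
  proof -
    have "s * e * i s * (s * e * i s) = s * (e * (i s * s)) * e * i s" by (simp add: mult.assoc)
    also have "\<dots> = s * (i s * s) * (e * e) * i s" by (simp add: com mult.assoc)
    also have "\<dots> = s * e * i s" using invS[OF s] gen by (simp flip: mult.assoc)
    finally show ?thesis .
  qed
  ultimately show ?case by (rule Cset.gen)
next
  case (add x y) thus ?case by (simp add: algebra_simps Cset.add)
next
  case (neg x) thus ?case using Cset.neg by (simp add: algebra_simps)
next
  case (mul x y)
  have d: "i s * s \<in> Cset S" using domS[OF s] by auto
  have "s * (x * y) * i s = s * x * (i s * s) * y * i s"
  proof -
    have "s * (x * y) * i s = (s * i s * s) * x * y * i s" using invS[OF s] by (simp add: mult.assoc)
    also have "\<dots> = s * ((i s * s) * x) * y * i s" by (simp add: mult.assoc)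
    also have "\<dots> = s * (x * (i s * s)) * y * i s" using C_comm[OF d mul(1)] by simp
    finally show ?thesis by (simp add: mult.assoc)
  qed
  also have "\<dots> = (s * x * i s) * (s * y * i s)" by (simp add: mult.assoc)
  finally show ?case using mul Cset.mul by simp
qed

lemma C_conj': assumes s: "s \<in> S" and c: "c \<in> Cset S" shows "i s * c * s \<in> Cset S"
  using C_conj[OF invS(1)[OF s] c] ii[OF s] by simp

definition Bs where "Bs = {c \<in> Cset S. c * c = c}"

lemma B_comm: "x \<in> Bs \<Longrightarrow> y \<in> Bs \<Longrightarrow> x * y = y * x"
  unfolding Bs_def using C_comm by blast
lemma B_idem: "x \<in> Bs \<Longrightarrow> x * x = x" unfolding Bs_def by blast
lemma B0: "0 \<in> Bs" unfolding Bs_def using C0 by simp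
lemma B1: "1 \<in> Bs" unfolding Bs_def using C1 by simp
lemma B_mul: assumes "x \<in> Bs" "y \<in> Bs" shows "x * y \<in> Bs"
proof -
  have "x * y * (x * y) = x * (y * x) * y" by (simp add: mult.assoc)
  also have "\<dots> = x * (x * y) * y" using B_comm[OF assms] by simp
  also have "\<dots> = x * x * (y * y)" by (simp add: mult.assoc)
  finally show ?thesis using assms Cset.mul unfolding Bs_def by auto
qed
lemma B_compl: assumes "x \<in> Bs" shows "1 - x \<in> Bs"
  using assms Cdiff C1 unfolding Bs_def by (auto simp: algebra_simps)
lemma B_orth_add: assumes "x \<in> Bs" "y \<in> Bs" "x * y = 0" shows "x + y \<in> Bs"
proof -
  have "y * x = 0" using assms B_comm by metis
  thus ?thesis using assms Cset.add unfolding Bs_def by (auto simp: algebra_simps)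
qed
lemma B_join: assumes "x \<in> Bs" "y \<in> Bs" shows "x + y - x * y \<in> Bs"
proof -
  have "x + y - x * y = x + (1 - x) * y" by (simp add: algebra_simps)
  moreover have "x * ((1 - x) * y) = 0" using B_idem[OF assms(1)] by (simp add: algebra_simps flip: mult.assoc)
  ultimately show ?thesis using B_orth_add assms B_mul B_compl by metis
qed

lemma B_conj: assumes s: "s \<in> S" and b: "b \<in> Bs" shows "s * b * i s \<in> Bs" "i s * b * s \<in> Bs"
proof -
  have d: "i s * s \<in> Cset S" "s * i s \<in> Cset S" using domS[OF s] by auto
  have bC: "b \<in> Cset S" and bb: "b * b = b" using b unfolding Bs_def by auto
  have "s * b * i s * (s * b * i s) = s * (b * (i s * s)) * b * i s" by (simp add: mult.assoc)
  also have "\<dots> = s * (i s * s) * (b * b) * i s" using C_comm[OF bC d(1)] by (simp add: mult.assoc)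
  also have "\<dots> = s * b * i s" using invS[OF s] bb by (simp flip: mult.assoc)
  finally show "s * b * i s \<in> Bs" using C_conj[OF s bC] unfolding Bs_def by auto
  have "i s * b * s * (i s * b * s) = i s * (b * (s * i s)) * b * s" by (simp add: mult.assoc)
  also have "\<dots> = i s * (s * i s) * (b * b) * s" using C_comm[OF bC d(2)] by (simp add: mult.assoc)
  also have "\<dots> = i s * b * s" using invS[OF s] bb by (simp add: mult.assoc)
  finally show "i s * b * s \<in> Bs" using C_conj'[OF s bC] unfolding Bs_def by auto
qed


lemma B_C: "b \<in> Bs \<Longrightarrow> b \<in> Cset S" unfolding Bs_def by auto
lemma B_idem_l: "b \<in> Bs \<Longrightarrow> b * (b * z) = b * z" using B_idem by (simp flip: mult.assoc)
lemma B_comm_l: assumes "x \<in> Bs" "y \<in> Bs" shows "x * (y * z) = y * (x * z)"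
proof -
  have "x * (y * z) = (x * y) * z" by (simp add: mult.assoc)
  also have "\<dots> = (y * x) * z" using B_comm[OF assms] by simp
  finally show ?thesis by (simp add: mult.assoc)
qed

definition W where "W a a' \<longleftrightarrow> a * a' * a = a \<and> a' * a * a' = a' \<and> (\<forall>b\<in>Bs. a * b * a' \<in> Bs \<and> a' * b * a \<in> Bs)"
definition Ts where "Ts = {a. \<exists>a'. W a a'}"

lemma W_sym: "W a a' \<Longrightarrow> W a' a" unfolding W_def by auto
lemma W_1: "W a a' \<Longrightarrow> a * a' * a = a" unfolding W_def by auto
lemma W_2: "W a a' \<Longrightarrow> a' * a * a' = a'" unfolding W_def by auto
lemma W_1l: assumes "W a a'" shows "a * (a' * (a * z)) = a * z"
proof -
  have "a * (a' * (a * z)) = (a * a' * a) * z" by (simp add: mult.assoc)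
  thus ?thesis using assms unfolding W_def by simp
qed
lemma W_2l: assumes "W a a'" shows "a' * (a * (a' * z)) = a' * z"
proof -
  have "a' * (a * (a' * z)) = (a' * a * a') * z" by (simp add: mult.assoc)
  thus ?thesis using assms unfolding W_def by simp
qed
lemma W_conj: "W a a' \<Longrightarrow> b \<in> Bs \<Longrightarrow> a * b * a' \<in> Bs" "W a a' \<Longrightarrow> b \<in> Bs \<Longrightarrow> a' * b * a \<in> Bs"
  unfolding W_def by auto
lemma W_dom: "W a a' \<Longrightarrow> a' * a \<in> Bs" "W a a' \<Longrightarrow> a * a' \<in> Bs"
  using W_conj[of a a' 1] B1 by auto

lemma W_mul: assumes a: "W a a'" and c: "W c c'" shows "W (a * c) (c' * a')"
proof -
  have da: "a' * a \<in> Bs" "a * a' \<in> Bs" and dc: "c' * c \<in> Bs" "c * c' \<in> Bs" using W_dom a c by auto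
  have "a * c * (c' * a') * (a * c) = a * ((c * c') * (a' * a)) * c" by (simp add: mult.assoc)
  also have "\<dots> = a * ((a' * a) * (c * c')) * c" using B_comm[OF dc(2) da(1)] by simp
  also have "\<dots> = (a * a' * a) * (c * c' * c)" by (simp add: mult.assoc)
  finally have 1: "a * c * (c' * a') * (a * c) = a * c" using W_1[OF a] W_1[OF c] by simp
  have "c' * a' * (a * c) * (c' * a') = c' * ((a' * a) * (c * c')) * a'" by (simp add: mult.assoc)
  also have "\<dots> = c' * ((c * c') * (a' * a)) * a'" using B_comm[OF dc(2) da(1)] by simp
  also have "\<dots> = (c' * c * c') * (a' * a * a')" by (simp add: mult.assoc)
  finally have 2: "c' * a' * (a * c) * (c' * a') = c' * a'" using W_2[OF a] W_2[OF c] by simp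
  have 3: "a * c * b * (c' * a') \<in> Bs \<and> c' * a' * b * (a * c) \<in> Bs" if "b \<in> Bs" for b
  proof -
    have "a * c * b * (c' * a') = a * (c * b * c') * a'" "c' * a' * b * (a * c) = c' * (a' * b * a) * c"
      by (simp_all add: mult.assoc)
    moreover have "a * (c * b * c') * a' \<in> Bs" using W_conj(1)[OF a W_conj(1)[OF c that]] .
    moreover have "c' * (a' * b * a) * c \<in> Bs" using W_conj(2)[OF c W_conj(2)[OF a that]] .
    ultimately show ?thesis by simp
  qed
  show ?thesis unfolding W_def using 1 2 3 by blast
qed

lemma W_S: "s \<in> S \<Longrightarrow> W s (i s)"
  unfolding W_def using invS(2,3) B_conj by blast

lemma W_B: assumes "b \<in> Bs" shows "W b b"
  unfolding W_def using assms B_idem B_mul by auto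

lemma W_idem: assumes x: "W x x'" and xx: "x * x = x" shows "x * x' = x' * x" "x * x' = x"
proof -
  define e where "e = x' * x"
  define f where "f = x * x'"
  have eB: "e \<in> Bs" and fB: "f \<in> Bs" using W_dom x e_def f_def by auto
  have ex: "e * x = e" unfolding e_def by (simp add: mult.assoc xx)
  have xe: "x * e = x" unfolding e_def using W_1[OF x] by (simp add: mult.assoc)
  have fx: "f * x = x" unfolding f_def using W_1[OF x] by simp
  have xf: "x * f = f" unfolding f_def by (simp flip: mult.assoc add: xx)
  have "e = e * (f * x)" using ex fx by simp
  also have "\<dots> = (f * e) * x" using B_comm[OF eB fB] by (simp flip: mult.assoc)
  also have "\<dots> = f * e" using ex by (simp add: mult.assoc)
  finally have e1: "e = f * e" .
  have "x * (f * e) = (x * f) * e" by (simp add: mult.assoc)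
  also have "\<dots> = f * e" using xf by simp
  finally have "x * (f * e) = e" using e1 by simp
  moreover have "x * (e * f) = f" using xe xf by (simp flip: mult.assoc)
  ultimately have "e = f" using B_comm[OF eB fB] by simp
  thus "x * x' = x' * x" using e_def f_def by simp
  show "x * x' = x" using \<open>e = f\<close> xe e_def f_def xf by simp
qed

lemma Ts_idem: assumes "x \<in> Ts" "x * x = x" shows "x \<in> Bs"
proof -
  obtain x' where x: "W x x'" using assms unfolding Ts_def by blast
  have "x * x' = x" using W_idem[OF x assms(2)] by blast
  thus ?thesis using W_dom(2)[OF x] by simp
qed

lemma Ts_mul: "a \<in> Ts \<Longrightarrow> c \<in> Ts \<Longrightarrow> a * c \<in> Ts"
  unfolding Ts_def using W_mul by blast
lemma S_Ts: "S \<subseteq> Ts" unfolding Ts_def using W_S by blast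
lemma B_Ts: "Bs \<subseteq> Ts" unfolding Ts_def using W_B by blast

lemma W_unique: assumes y: "W a y" and z: "W a z" shows "y = z"
proof -
  have ya: "y * a \<in> Bs" and za: "z * a \<in> Bs" and ay: "a * y \<in> Bs" and az: "a * z \<in> Bs"
    using W_dom y z by auto
  have "y = y * a * y" using W_2[OF y] by simp
  also have "\<dots> = y * (a * z * a) * y" using W_1[OF z] by simp
  also have "\<dots> = (y * a) * (z * a) * y" by (simp add: mult.assoc)
  also have "\<dots> = (z * a) * (y * a) * y" using B_comm[OF ya za] by simp
  also have "\<dots> = z * a * (y * a * y)" by (simp add: mult.assoc)
  finally have 1: "y = z * a * y" using W_2[OF y] by simp
  have "z = z * a * z" using W_2[OF z] by simp
  also have "\<dots> = z * (a * y * a) * z" using W_1[OF y] by simp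
  also have "\<dots> = z * ((a * y) * (a * z))" by (simp add: mult.assoc)
  also have "\<dots> = z * ((a * z) * (a * y))" using B_comm[OF ay az] by simp
  also have "\<dots> = (z * a * z) * a * y" by (simp add: mult.assoc)
  finally have 2: "z = z * a * y" using W_2[OF z] by simp
  show ?thesis using 1 2 by simp
qed

lemma Ts_W: assumes "a \<in> Ts" "t \<in> Ts" "a * t * a = a" "t * a * t = t" shows "W a t"
proof -
  obtain a' where a': "W a a'" using assms unfolding Ts_def by blast
  have "a * t * (a * t) = a * t * a * t" by (simp add: mult.assoc)
  hence "a * t * (a * t) = a * t" using assms(3) by simp
  hence at: "a * t \<in> Bs" using Ts_idem[OF Ts_mul[OF assms(1,2)]] by blast
  have "t * a * (t * a) = t * a * t * a" by (simp add: mult.assoc)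
  hence "t * a * (t * a) = t * a" using assms(4) by simp
  hence ta: "t * a \<in> Bs" using Ts_idem[OF Ts_mul[OF assms(2,1)]] by blast
  have "t = t * a * t" using assms by simp
  also have "\<dots> = t * (a * a' * a) * t" using W_1[OF a'] by simp
  also have "\<dots> = (t * a) * a' * (a * t)" by (simp add: mult.assoc)
  finally have tt: "(t * a) * a' * (a * t) = t" by simp
  have "\<forall>b\<in>Bs. a * b * t \<in> Bs \<and> t * b * a \<in> Bs"
  proof
    fix b assume b: "b \<in> Bs"
    have "a * b * t = a * b * ((t * a) * a' * (a * t))" by (simp only: tt)
    also have "\<dots> = (a * (b * (t * a)) * a') * (a * t)" by (simp add: mult.assoc)
    finally have 1: "a * b * t = (a * (b * (t * a)) * a') * (a * t)" .
    have "t * b * a = ((t * a) * a' * (a * t)) * b * a" by (simp only: tt)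
    also have "\<dots> = (t * a) * (a' * ((a * t) * b) * a)" by (simp add: mult.assoc)
    finally have 2: "t * b * a = (t * a) * (a' * ((a * t) * b) * a)" .
    have "a * (b * (t * a)) * a' \<in> Bs" using W_conj(1)[OF a' B_mul[OF b ta]] .
    hence 3: "a * b * t \<in> Bs" using 1 B_mul at by simp
    have "a' * ((a * t) * b) * a \<in> Bs" using W_conj(2)[OF a' B_mul[OF at b]] .
    hence 4: "t * b * a \<in> Bs" using 2 B_mul ta by simp
    show "a * b * t \<in> Bs \<and> t * b * a \<in> Bs" using 3 4 by blast
  qed
  thus ?thesis unfolding W_def using assms by blast
qed


abbreviation iT where "iT \<equiv> inv_in Ts"

lemma T0: "0 \<in> Ts" and T1: "1 \<in> Ts" using S_Ts zS oS by auto

lemma T_inv_eq: assumes "W a a'" shows "iT a = a'"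
proof -
  have aT: "a \<in> Ts" and a'T: "a' \<in> Ts" using assms W_sym unfolding Ts_def by blast+
  have "\<exists>!t. t \<in> Ts \<and> a = a * t * a \<and> t = t * a * t"
  proof
    show "a' \<in> Ts \<and> a = a * a' * a \<and> a' = a' * a * a'" using a'T W_1[OF assms] W_2[OF assms] by simp
  next
    fix t assume t: "t \<in> Ts \<and> a = a * t * a \<and> t = t * a * t"
    hence "W a t" using Ts_W[OF aT] by simp
    thus "t = a'" using W_unique assms by blast
  qed
  from the1_equality[OF this] show ?thesis using a'T W_1[OF assms] W_2[OF assms] unfolding inv_in_def by simp
qed

lemma T_inv: assumes "a \<in> Ts" shows "W a (iT a)" "iT a \<in> Ts"
proof -
  obtain a' where "W a a'" using assms unfolding Ts_def by blast
  thus "W a (iT a)" using T_inv_eq by simp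
  thus "iT a \<in> Ts" using W_sym unfolding Ts_def by blast
qed

lemma IMT: "is_inverse_monoid Ts"
  unfolding is_inverse_monoid_def
proof (intro conjI ballI)
  show "1 \<in> Ts" using T1 .
  fix x y assume "x \<in> Ts" "y \<in> Ts" thus "x * y \<in> Ts" using Ts_mul by blast
next
  fix s assume s: "s \<in> Ts"
  show "\<exists>!t. t \<in> Ts \<and> s = s * t * s \<and> t = t * s * t"
  proof
    show "iT s \<in> Ts \<and> s = s * iT s * s \<and> iT s = iT s * s * iT s"
      using T_inv[OF s] W_1 W_2 by simp
  next
    fix t assume t: "t \<in> Ts \<and> s = s * t * s \<and> t = t * s * t"
    hence "W s t" using Ts_W[OF s] by simp
    thus "t = iT s" using T_inv_eq by simp
  qed
qed

lemma iT_mul: assumes "a \<in> Ts" "c \<in> Ts" shows "iT (a * c) = iT c * iT a"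
  using T_inv_eq W_mul T_inv assms by blast
lemma iT_B: "b \<in> Bs \<Longrightarrow> iT b = b" using T_inv_eq W_B by blast
lemma iT_iT: "a \<in> Ts \<Longrightarrow> iT (iT a) = a" using T_inv_eq W_sym T_inv by blast
lemma dB: "a \<in> Ts \<Longrightarrow> iT a * a \<in> Bs" using W_dom T_inv by blast
lemma rB: "a \<in> Ts \<Longrightarrow> a * iT a \<in> Bs" using W_dom T_inv by blast
lemma Ta1: "a \<in> Ts \<Longrightarrow> a * iT a * a = a" using W_1 T_inv by blast
lemma Ta2: "a \<in> Ts \<Longrightarrow> iT a * a * iT a = iT a" using W_2 T_inv by blast
lemma Ta1r: "a \<in> Ts \<Longrightarrow> a * (iT a * a) = a" using Ta1 by (simp add: mult.assoc)
lemma Ta1l: "a \<in> Ts \<Longrightarrow> (a * iT a) * a = a" using Ta1 by (simp add: mult.assoc)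
lemma Ta2r: "a \<in> Ts \<Longrightarrow> iT a * (a * iT a) = iT a" using Ta2 by (simp add: mult.assoc)
lemma Ta2l: "a \<in> Ts \<Longrightarrow> (iT a * a) * iT a = iT a" using Ta2 by (simp add: mult.assoc)
lemma iT_T: "a \<in> Ts \<Longrightarrow> iT a \<in> Ts" using T_inv by blast
lemma Tl1: "a \<in> Ts \<Longrightarrow> a * (iT a * (a * z)) = a * z" using W_1l T_inv by blast
lemma Tl2: "a \<in> Ts \<Longrightarrow> iT a * (a * (iT a * z)) = iT a * z" using W_2l T_inv by blast

lemma d_mulB: assumes u: "u \<in> Ts" and e: "e \<in> Bs" shows "iT (u * e) * (u * e) = (iT u * u) * e"
proof -
  have "iT (u * e) * (u * e) = e * (iT u * u) * e" using iT_mul[OF u B_Ts[THEN subsetD, OF e]] iT_B[OF e]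
    by (simp add: mult.assoc)
  also have "\<dots> = (iT u * u) * (e * e)" using B_comm[OF e dB[OF u]] by (simp add: mult.assoc)
  finally show ?thesis using B_idem[OF e] by simp
qed

lemma le_of: assumes u: "u \<in> Ts" and e: "e \<in> Bs" and a: "a = u * e" shows "nat_le Ts a u"
proof -
  have "u * iT a * a = u * ((iT u * u) * e)" using d_mulB[OF u e] a by (simp add: mult.assoc)
  also have "\<dots> = u * e" using Ta1r[OF u] by (simp flip: mult.assoc)
  finally show ?thesis unfolding nat_le_def using a by simp
qed

lemma le_B: assumes x: "x \<in> Ts" and y: "y \<in> Ts" and le: "nat_le Ts x y"
  shows "x = y * (iT x * x)" "iT x * x = (iT y * y) * (iT x * x)"
proof -
  show 1: "x = y * (iT x * x)" using le unfolding nat_le_def by (simp add: mult.assoc)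
  have "iT x * x = iT (y * (iT x * x)) * (y * (iT x * x))" using 1 by simp
  also have "\<dots> = (iT y * y) * (iT x * x)" using d_mulB[OF y dB[OF x]] .
  finally show "iT x * x = (iT y * y) * (iT x * x)" .
qed

lemma le_antisym: assumes x: "x \<in> Ts" and y: "y \<in> Ts" and "nat_le Ts x y" "nat_le Ts y x" shows "x = y"
proof -
  have 1: "x = y * (iT x * x)" "iT x * x = (iT y * y) * (iT x * x)" using le_B[OF x y assms(3)] by auto
  have 2: "y = x * (iT y * y)" "iT y * y = (iT x * x) * (iT y * y)" using le_B[OF y x assms(4)] by auto
  have "iT x * x = iT y * y" using 1(2) 2(2) B_comm[OF dB[OF x] dB[OF y]] by simp
  thus ?thesis using 1(1) Ta1r[OF y] by simp
qed


lemma sub: assumes j: "j \<in> Ts" and a: "a \<in> Ts" and ja: "j * (iT a * a) = a"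
  shows "iT a = (iT a * a) * iT j" "iT a * a = (iT j * j) * (iT a * a)" "j * iT a = a * iT a"
    "a * iT a = j * (iT a * a) * iT j"
proof -
  have daT: "iT a * a \<in> Ts" using dB[OF a] B_Ts by blast
  have "iT a = iT (j * (iT a * a))" by (simp only: ja)
  also have "\<dots> = (iT a * a) * iT j" using iT_mul[OF j daT] iT_B[OF dB[OF a]] by simp
  finally show 1: "iT a = (iT a * a) * iT j" .
  have "iT a * a = iT (j * (iT a * a)) * (j * (iT a * a))" by (simp only: ja)
  also have "\<dots> = (iT j * j) * (iT a * a)" using d_mulB[OF j dB[OF a]] .
  finally show "iT a * a = (iT j * j) * (iT a * a)" .
  have "j * iT a = j * (iT a * a * iT a)" using Ta2[OF a] by simp
  also have "\<dots> = (j * (iT a * a)) * iT a" by (simp add: mult.assoc)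
  finally show "j * iT a = a * iT a" using ja by simp
  have "a * iT a = j * (iT a * a) * ((iT a * a) * iT j)" using 1 ja by simp
  also have "\<dots> = j * ((iT a * a) * (iT a * a)) * iT j" by (simp add: mult.assoc)
  finally show "a * iT a = j * (iT a * a) * iT j" using B_idem[OF dB[OF a]] by simp
qed

definition good where "good j A \<longleftrightarrow> j \<in> Ts \<and> A \<subseteq> Ts \<and> (\<forall>a\<in>A. j * (iT a * a) = a) \<and>
   (\<forall>x. (\<forall>a\<in>A. x * (iT a * a) = 0) \<longrightarrow> x * (iT j * j) = 0) \<and>
   (\<forall>x. (\<forall>a\<in>A. (a * iT a) * x = 0) \<longrightarrow> (j * iT j) * x = 0)"

lemma good_lub: assumes g: "good j A" shows "is_lub_in Ts Ts A j"
proof -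
  have j: "j \<in> Ts" and A: "A \<subseteq> Ts" and ja: "\<And>a. a \<in> A \<Longrightarrow> j * (iT a * a) = a"
    and ann: "\<And>x. (\<forall>a\<in>A. x * (iT a * a) = 0) \<Longrightarrow> x * (iT j * j) = 0"
    using g unfolding good_def by auto
  have 1: "\<forall>a\<in>A. nat_le Ts a j" using le_of[OF j dB] ja A by (metis subsetD)
  have 2: "nat_le Ts j u" if u: "u \<in> Ts" and ub: "\<forall>a\<in>A. nat_le Ts a u" for u
  proof -
    have "\<forall>a\<in>A. (u - j) * (iT a * a) = 0"
    proof
      fix a assume aA: "a \<in> A"
      have "a = u * (iT a * a)" using le_B(1)[OF _ u] ub aA A by blast
      thus "(u - j) * (iT a * a) = 0" using ja[OF aA] by (simp add: algebra_simps)
    qed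
    hence "(u - j) * (iT j * j) = 0" using ann by blast
    hence "j = u * (iT j * j)" using Ta1r[OF j] by (simp add: algebra_simps)
    thus ?thesis using le_of[OF u dB[OF j]] by simp
  qed
  show ?thesis unfolding is_lub_in_def using j 1 2 by blast
qed

lemma lub_unique: assumes "is_lub_in Ts Ts A j" "is_lub_in Ts Ts A k" shows "j = k"
  using assms le_antisym unfolding is_lub_in_def by blast


lemma goodD: assumes "good j A"
  shows "j \<in> Ts" "A \<subseteq> Ts" "\<And>a. a \<in> A \<Longrightarrow> j * (iT a * a) = a"
    "\<And>x. (\<forall>a\<in>A. x * (iT a * a) = 0) \<Longrightarrow> x * (iT j * j) = 0"
    "\<And>x. (\<forall>a\<in>A. (a * iT a) * x = 0) \<Longrightarrow> (j * iT j) * x = 0"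
  using assms unfolding good_def by auto

lemma good_left: assumes g: "good j A" and s: "s \<in> Ts" shows "good (s * j) ((\<lambda>a. s * a) ` A)"
proof -
  note G = goodD[OF g]
  have j: "j \<in> Ts" using G by blast
  have ds: "iT s * s \<in> Bs" and rs: "s * iT s \<in> Bs" using dB rB s by auto
  have 3: "s * j * (iT (s * a) * (s * a)) = s * a" if aA: "a \<in> A" for a
  proof -
    have a: "a \<in> Ts" using aA G by blast
    have "s * j * (iT (s * a) * (s * a)) = s * (j * iT a) * (iT s * s) * a" using iT_mul[OF s a] by (simp add: mult.assoc)
    also have "\<dots> = s * ((a * iT a) * (iT s * s)) * a" using sub(3)[OF j a G(3)[OF aA]] by (simp add: mult.assoc)
    also have "\<dots> = s * ((iT s * s) * (a * iT a)) * a" using B_comm[OF rB[OF a] ds] by simp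
    also have "\<dots> = (s * (iT s * s)) * ((a * iT a) * a)" by (simp add: mult.assoc)
    finally show ?thesis using Ta1r[OF s] Ta1l[OF a] by simp
  qed
  have 4: "x * (iT (s * j) * (s * j)) = 0" if H: "\<forall>b\<in>(\<lambda>a. s * a) ` A. x * (iT b * b) = 0" for x
  proof -
    define h where "h = iT j * (iT s * s) * j"
    have hB: "h \<in> Bs" unfolding h_def using W_conj(2)[OF T_inv(1)[OF j] ds] iT_iT[OF j] by simp
    have "(x * h) * (iT a * a) = 0" if aA: "a \<in> A" for a
    proof -
      have a: "a \<in> Ts" using aA G by blast
      obtain e where e: "e = iT a * a" by blast
      have eB: "e \<in> Bs" using dB[OF a] e by simp
      have e1: "iT a = e * iT j" and e2: "a = j * e" using sub(1)[OF j a G(3)[OF aA]] G(3)[OF aA] e by auto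
      have "iT (s * a) * (s * a) = iT a * (iT s * s) * a" using iT_mul[OF s a] by (simp add: mult.assoc)
      also have "\<dots> = (e * iT j) * (iT s * s) * (j * e)" by (simp only: e1[symmetric] e2[symmetric])
      also have "\<dots> = e * (h * e)" unfolding h_def by (simp add: mult.assoc)
      also have "\<dots> = h * e" using B_comm_l[OF eB hB] B_idem[OF eB] by simp
      finally have "iT (s * a) * (s * a) = h * e" .
      moreover have "x * (iT (s * a) * (s * a)) = 0" using H aA by blast
      ultimately show ?thesis using e by (simp add: mult.assoc)
    qed
    hence "(x * h) * (iT j * j) = 0" using G(4) by blast
    moreover have "h * (iT j * j) = h" unfolding h_def using Ta1r[OF j] by (simp add: mult.assoc)
    ultimately have "x * h = 0" by (simp add: mult.assoc)
    moreover have "iT (s * j) * (s * j) = h" unfolding h_def using iT_mul[OF s j] by (simp add: mult.assoc)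
    ultimately show ?thesis by simp
  qed
  have 5: "(s * j * iT (s * j)) * x = 0" if H: "\<forall>b\<in>(\<lambda>a. s * a) ` A. (b * iT b) * x = 0" for x
  proof -
    have "(a * iT a) * (iT s * x) = 0" if aA: "a \<in> A" for a
    proof -
      have a: "a \<in> Ts" using aA G by blast
      have z: "s * a * iT (s * a) * x = 0" using H aA by blast
      have "(a * iT a) * (iT s * x) = (a * iT a) * ((iT s * s) * (iT s * x))" using W_2l[OF T_inv(1)[OF s]] by (simp add: mult.assoc)
      also have "\<dots> = (iT s * s) * ((a * iT a) * (iT s * x))" using B_comm_l[OF rB[OF a] ds] by simp
      also have "\<dots> = iT s * (s * a * iT (s * a) * x)" using iT_mul[OF s a] by (simp add: mult.assoc)
      finally show ?thesis using z by simp
    qed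
    hence "(j * iT j) * (iT s * x) = 0" using G(5) by blast
    hence "s * ((j * iT j) * (iT s * x)) = 0" by simp
    thus ?thesis using iT_mul[OF s j] by (simp add: mult.assoc)
  qed
  show ?thesis unfolding good_def using Ts_mul[OF s j] G(2) Ts_mul[OF s] 3 4 5 by auto
qed

lemma good_right: assumes g: "good j A" and s: "s \<in> Ts" shows "good (j * s) ((\<lambda>a. a * s) ` A)"
proof -
  note G = goodD[OF g]
  have j: "j \<in> Ts" using G by blast
  have ds: "iT s * s \<in> Bs" and rs: "s * iT s \<in> Bs" using dB rB s by auto
  have 3: "j * s * (iT (a * s) * (a * s)) = a * s" if aA: "a \<in> A" for a
  proof -
    have a: "a \<in> Ts" using aA G by blast
    have "j * s * (iT (a * s) * (a * s)) = j * ((s * iT s) * (iT a * a)) * s" using iT_mul[OF a s] by (simp add: mult.assoc)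
    also have "\<dots> = j * ((iT a * a) * (s * iT s)) * s" using B_comm[OF rs dB[OF a]] by simp
    also have "\<dots> = (j * (iT a * a)) * (s * iT s * s)" by (simp add: mult.assoc)
    finally show ?thesis using G(3)[OF aA] Ta1[OF s] by simp
  qed
  have 4: "x * (iT (j * s) * (j * s)) = 0" if H: "\<forall>b\<in>(\<lambda>a. a * s) ` A. x * (iT b * b) = 0" for x
  proof -
    have "(x * iT s) * (iT a * a) = 0" if aA: "a \<in> A" for a
    proof -
      have a: "a \<in> Ts" using aA G by blast
      have z: "x * (iT (a * s) * (a * s)) = 0" using H aA by blast
      have "(x * iT s) * (iT a * a) = x * (iT s * (s * iT s)) * (iT a * a)" using Ta2r[OF s] by simp
      also have "\<dots> = x * iT s * ((s * iT s) * (iT a * a))" by (simp add: mult.assoc)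
      also have "\<dots> = x * iT s * ((iT a * a) * (s * iT s))" using B_comm[OF rs dB[OF a]] by simp
      also have "\<dots> = x * (iT (a * s) * (a * s)) * iT s" using iT_mul[OF a s] by (simp add: mult.assoc)
      finally show ?thesis using z by simp
    qed
    hence "(x * iT s) * (iT j * j) = 0" using G(4) by blast
    hence "(x * iT s) * (iT j * j) * s = 0" by simp
    thus ?thesis using iT_mul[OF j s] by (simp add: mult.assoc)
  qed
  have 5: "(j * s * iT (j * s)) * x = 0" if H: "\<forall>b\<in>(\<lambda>a. a * s) ` A. (b * iT b) * x = 0" for x
  proof -
    define g where "g = j * (s * iT s) * iT j"
    have gB: "g \<in> Bs" unfolding g_def using W_conj(1)[OF T_inv(1)[OF j] rs] .
    have "(a * iT a) * (g * x) = 0" if aA: "a \<in> A" for a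
    proof -
      have a: "a \<in> Ts" using aA G by blast
      obtain e where e: "e = iT a * a" by blast
      have eB: "e \<in> Bs" using dB[OF a] e by simp
      have e1: "iT a = e * iT j" and e2: "a = j * e" and e3: "e = (iT j * j) * e"
        using sub(1,2)[OF j a G(3)[OF aA]] G(3)[OF aA] e by auto
      have e4: "a * iT a = j * e * iT j" using sub(4)[OF j a G(3)[OF aA]] e by simp
      have z: "a * s * iT (a * s) * x = 0" using H aA by blast
      have "a * s * iT (a * s) = a * (s * iT s) * iT a" using iT_mul[OF a s] by (simp add: mult.assoc)
      also have "\<dots> = (j * e) * (s * iT s) * (e * iT j)" by (simp only: e1[symmetric] e2[symmetric])
      also have "\<dots> = j * (e * ((s * iT s) * e)) * iT j" by (simp add: mult.assoc)
      also have "\<dots> = j * (e * (s * iT s)) * iT j" using B_comm_l[OF eB rs, of e] B_idem[OF eB] B_comm[OF eB rs] by simp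
      finally have z1: "a * s * iT (a * s) = j * (e * (s * iT s)) * iT j" .
      have "(a * iT a) * g = j * (e * (iT j * j) * (s * iT s)) * iT j" unfolding g_def e4 by (simp add: mult.assoc)
      also have "\<dots> = j * (e * (s * iT s)) * iT j" using e3 B_comm[OF eB dB[OF j]] by simp
      finally have "(a * iT a) * g = a * s * iT (a * s)" using z1 by simp
      thus ?thesis using z by (simp flip: mult.assoc)
    qed
    hence "(j * iT j) * (g * x) = 0" using G(5) by blast
    moreover have "(j * iT j) * g = g" unfolding g_def using Ta1l[OF j] by (simp flip: mult.assoc)
    ultimately have "g * x = 0" by (simp flip: mult.assoc)
    moreover have "j * s * iT (j * s) = g" unfolding g_def using iT_mul[OF j s] by (simp add: mult.assoc)
    ultimately show ?thesis by simp
  qed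
  show ?thesis unfolding good_def using Ts_mul[OF j s] G(2) Ts_mul[OF _ s] 3 4 5 by auto
qed


lemma compat_eq: assumes a: "a \<in> Ts" and c: "c \<in> Ts" and f: "idem (a * iT c)"
  shows "a * (iT c * c) = c * (iT a * a)"
proof -
  define f where "f = a * iT c"
  have fT: "f \<in> Ts" unfolding f_def using Ts_mul[OF a iT_T[OF c]] .
  have ff: "f * f = f" using f unfolding f_def idem_def .
  have fB: "f \<in> Bs" using Ts_idem[OF fT ff] .
  have "f = iT f" using iT_B[OF fB] by simp
  also have "\<dots> = c * iT a" unfolding f_def using iT_mul[OF a iT_T[OF c]] iT_iT[OF c] by simp
  finally have f2: "f = c * iT a" .
  have "c * (iT a * a) = f * a" using f2 by (simp add: mult.assoc)
  also have "\<dots> = (f * f) * a" using ff by simp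
  also have "\<dots> = (a * iT c) * (c * iT a) * a" by (simp only: f_def[symmetric] f2[symmetric])
  also have "\<dots> = a * ((iT c * c) * (iT a * a))" by (simp add: mult.assoc)
  also have "\<dots> = a * ((iT a * a) * (iT c * c))" using B_comm[OF dB[OF a] dB[OF c]] by simp
  also have "\<dots> = a * (iT c * c)" using Ta1r[OF a] by (simp flip: mult.assoc)
  finally show ?thesis by simp
qed

lemma orth_sum: assumes a: "a \<in> Ts" and b: "b \<in> Ts"
  and d0: "(iT a * a) * (iT b * b) = 0" and r0: "(a * iT a) * (b * iT b) = 0"
  shows "W (a + b) (iT a + iT b)" "a + b \<in> Ts" "iT (a + b) = iT a + iT b"
    "iT (a + b) * (a + b) = iT a * a + iT b * b" "(a + b) * iT (a + b) = a * iT a + b * iT b"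
proof -
  have da: "iT a * a \<in> Bs" and db: "iT b * b \<in> Bs" and ra: "a * iT a \<in> Bs" and rb: "b * iT b \<in> Bs"
    using dB rB a b by auto
  have d0': "(iT b * b) * (iT a * a) = 0" and r0': "(b * iT b) * (a * iT a) = 0"
    using d0 r0 B_comm da db ra rb by metis+
  have z1: "iT a * b = 0"
  proof -
    have "iT a * b = iT a * ((a * iT a) * (b * iT b)) * b" using Ta2r[OF a] Ta1r[OF b] Tl2[OF a] by (simp add: mult.assoc)
    thus ?thesis using r0 by simp
  qed
  have z2: "iT b * a = 0"
  proof -
    have "iT b * a = iT b * ((b * iT b) * (a * iT a)) * a" using Ta2r[OF b] Ta1r[OF a] Tl2[OF b] by (simp add: mult.assoc)
    thus ?thesis using r0' by simp
  qed
  have z3: "a * iT b = 0"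
  proof -
    have "a * iT b = a * ((iT a * a) * (iT b * b)) * iT b" using Ta1r[OF a] Ta2r[OF b] Tl1[OF a] by (simp add: mult.assoc)
    thus ?thesis using d0 by simp
  qed
  have z4: "b * iT a = 0"
  proof -
    have "b * iT a = b * ((iT b * b) * (iT a * a)) * iT a" using Ta1r[OF b] Ta2r[OF a] Tl1[OF b] by (simp add: mult.assoc)
    thus ?thesis using d0' by simp
  qed
  have zl: "iT a * (b * z) = 0" "iT b * (a * z) = 0" "a * (iT b * z) = 0" "b * (iT a * z) = 0" for z
    using z1 z2 z3 z4 by (simp_all flip: mult.assoc)
  have 1: "(a + b) * (iT a + iT b) * (a + b) = a + b"
    using Ta1[OF a] Ta1[OF b] by (simp add: algebra_simps zl z1 z2 z3 z4)
  have 2: "(iT a + iT b) * (a + b) * (iT a + iT b) = iT a + iT b"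
    using Ta2[OF a] Ta2[OF b] by (simp add: algebra_simps zl z1 z2 z3 z4)
  have 3: "(a + b) * x * (iT a + iT b) \<in> Bs \<and> (iT a + iT b) * x * (a + b) \<in> Bs" if x: "x \<in> Bs" for x
  proof -
    have c1: "a * x * iT b = 0"
    proof -
      have "a * x * iT b = a * ((iT a * a) * x * (iT b * b)) * iT b" using Ta1r[OF a] Ta2r[OF b] Tl1[OF a] by (simp add: mult.assoc)
      also have "\<dots> = a * (x * ((iT a * a) * (iT b * b))) * iT b" using B_comm[OF da x] by (simp add: mult.assoc)
      finally show ?thesis using d0 by simp
    qed
    have c2: "b * x * iT a = 0"
    proof -
      have "b * x * iT a = b * ((iT b * b) * x * (iT a * a)) * iT a" using Ta1r[OF b] Ta2r[OF a] Tl1[OF b] by (simp add: mult.assoc)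
      also have "\<dots> = b * (x * ((iT b * b) * (iT a * a))) * iT a" using B_comm[OF db x] by (simp add: mult.assoc)
      finally show ?thesis using d0' by simp
    qed
    have c3: "iT a * x * b = 0"
    proof -
      have "iT a * x * b = iT a * ((a * iT a) * x * (b * iT b)) * b" using Ta2r[OF a] Ta1r[OF b] Tl2[OF a] by (simp add: mult.assoc)
      also have "\<dots> = iT a * (x * ((a * iT a) * (b * iT b))) * b" using B_comm[OF ra x] by (simp add: mult.assoc)
      finally show ?thesis using r0 by simp
    qed
    have c4: "iT b * x * a = 0"
    proof -
      have "iT b * x * a = iT b * ((b * iT b) * x * (a * iT a)) * a" using Ta2r[OF b] Ta1r[OF a] Tl2[OF b] by (simp add: mult.assoc)
      also have "\<dots> = iT b * (x * ((b * iT b) * (a * iT a))) * a" using B_comm[OF rb x] by (simp add: mult.assoc)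
      finally show ?thesis using r0' by simp
    qed
    have e1: "(a + b) * x * (iT a + iT b) = a * x * iT a + b * x * iT b"
      using c1 c2 by (simp add: algebra_simps)
    have e2: "(iT a + iT b) * x * (a + b) = iT a * x * a + iT b * x * b"
      using c3 c4 by (simp add: algebra_simps)
    have o1: "(a * x * iT a) * (b * x * iT b) = 0" using zl by (simp add: mult.assoc)
    have o2: "(iT a * x * a) * (iT b * x * b) = 0" using zl by (simp add: mult.assoc)
    have "a * x * iT a \<in> Bs" "b * x * iT b \<in> Bs" "iT a * x * a \<in> Bs" "iT b * x * b \<in> Bs"
      using W_conj[OF T_inv(1)[OF a] x] W_conj[OF T_inv(1)[OF b] x] by auto
    thus ?thesis using e1 e2 o1 o2 B_orth_add by simp
  qed
  show W: "W (a + b) (iT a + iT b)" unfolding W_def using 1 2 3 by blast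
  thus "a + b \<in> Ts" unfolding Ts_def by blast
  show i: "iT (a + b) = iT a + iT b" using T_inv_eq[OF W] .
  show "iT (a + b) * (a + b) = iT a * a + iT b * b" unfolding i using z1 z2 by (simp add: algebra_simps)
  show "(a + b) * iT (a + b) = a * iT a + b * iT b" unfolding i using z3 z4 by (simp add: algebra_simps)
qed


lemma iT0: "iT 0 = 0" using iT_B[OF B0] .

lemma good_empty: "good 0 {}"
  unfolding good_def using T0 iT0 by simp

lemma good_insert: assumes g: "good j F" and c: "c \<in> Ts"
  and cp: "\<And>a. a \<in> F \<Longrightarrow> idem (iT c * a) \<and> idem (a * iT c)"
  shows "good (c + j * (1 - iT c * c)) (insert c F)"
proof -
  note G = goodD[OF g]
  have j: "j \<in> Ts" using G by blast
  define p where "p = 1 - iT c * c"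
  have dc: "iT c * c \<in> Bs" using dB[OF c] .
  have pB: "p \<in> Bs" unfolding p_def using B_compl[OF dc] .
  have pT: "p \<in> Ts" using pB B_Ts by blast
  have jp: "j * p \<in> Ts" using Ts_mul[OF j pT] .
  have pdc: "p * (iT c * c) = 0" "(iT c * c) * p = 0" unfolding p_def using B_idem[OF dc] by (simp_all add: algebra_simps)
  have ijp: "iT (j * p) = p * iT j" using iT_mul[OF j pT] iT_B[OF pB] by simp
  define gg where "gg = iT c * j"
  have ggT: "gg \<in> Ts" unfolding gg_def using Ts_mul[OF iT_T[OF c] j] .
  have "(gg * gg - gg) * (iT a * a) = 0" if aA: "a \<in> F" for a
  proof -
    have a: "a \<in> Ts" using aA G by blast
    have caT: "iT c * a \<in> Ts" using Ts_mul[OF iT_T[OF c] a] .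
    have caB: "iT c * a \<in> Bs" using Ts_idem[OF caT] cp[OF aA] unfolding idem_def by blast
    have ge: "gg * (iT a * a) = iT c * a" unfolding gg_def using G(3)[OF aA] by (simp add: mult.assoc)
    have "iT c * a = iT c * a * (iT a * a)" using Ta1r[OF a] by (simp add: mult.assoc)
    hence ca2: "iT c * a = (iT a * a) * (iT c * a)" using B_comm[OF caB dB[OF a]] by simp
    have "gg * gg * (iT a * a) = gg * (iT c * a)" using ge by (simp add: mult.assoc)
    also have "\<dots> = gg * ((iT a * a) * (iT c * a))" by (simp only: ca2[symmetric])
    also have "\<dots> = gg * (iT a * a) * (iT c * a)" by (simp add: mult.assoc)
    also have "\<dots> = iT c * a" using ge B_idem[OF caB] by simp
    finally show ?thesis using ge by (simp add: algebra_simps)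
  qed
  hence "(gg * gg - gg) * (iT j * j) = 0" using G(4) by blast
  moreover have "gg * (iT j * j) = gg" unfolding gg_def using Ta1r[OF j] by (simp add: mult.assoc)
  ultimately have "gg * gg * (iT j * j) = gg" by (simp add: algebra_simps)
  hence ggi: "gg * gg = gg" using \<open>gg * (iT j * j) = gg\<close> by (simp add: mult.assoc)
  have ggB: "gg \<in> Bs" using Ts_idem[OF ggT ggi] .
  have "gg = iT gg" using iT_B[OF ggB] by simp
  also have "\<dots> = iT j * c" unfolding gg_def using iT_mul[OF iT_T[OF c] j] iT_iT[OF c] by simp
  finally have gg2: "gg = iT j * c" .
  have "gg * (iT c * c) = iT j * (c * iT c * c)" using gg2 by (simp add: mult.assoc)
  hence ggdc: "gg * (iT c * c) = gg" using Ta1[OF c] gg2 by simp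
  have ggp: "gg * p = 0" unfolding p_def using ggdc by (simp add: algebra_simps)
  have D0: "(iT c * c) * (iT (j * p) * (j * p)) = 0"
    using d_mulB[OF j pB] B_comm_l[OF dc dB[OF j]] pdc by (simp add: mult.assoc flip: mult.assoc[of "iT c * c" p])
  have R0: "(c * iT c) * ((j * p) * iT (j * p)) = 0"
  proof -
    have "(c * iT c) * ((j * p) * iT (j * p)) = c * (gg * p) * p * iT j" unfolding ijp gg_def by (simp add: mult.assoc)
    thus ?thesis using ggp by simp
  qed
  note O = orth_sum[OF c jp D0 R0]
  have S: "c + j * (1 - iT c * c) = c + j * p" unfolding p_def by simp
  have i3: "(c + j * p) * (iT a * a) = a" if aA: "a \<in> insert c F" for a
  proof (cases "a = c")
    case True
    thus ?thesis using Ta1r[OF c] pdc(1) by (simp add: algebra_simps flip: mult.assoc[of j p])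
  next
    case False
    hence aF: "a \<in> F" using aA by blast
    have a: "a \<in> Ts" using aF G by blast
    have ce: "c * (iT a * a) = a * (iT c * c)" using compat_eq[OF a c] cp[OF aF] by simp
    have "(c + j * p) * (iT a * a) = c * (iT a * a) + j * (iT a * a) - j * ((iT a * a) * (iT c * c))"
      unfolding p_def using B_comm[OF dc dB[OF a]] by (simp add: algebra_simps)
    also have "\<dots> = a" using ce G(3)[OF aF] by (simp flip: mult.assoc)
    finally show ?thesis .
  qed
  have i4: "x * (iT (c + j * p) * (c + j * p)) = 0" if H: "\<forall>a\<in>insert c F. x * (iT a * a) = 0" for x
  proof -
    have "x * (iT j * j) = 0" using G(4) H by blast
    moreover have "x * (iT c * c) = 0" using H by blast
    ultimately show ?thesis unfolding O(4) using d_mulB[OF j pB] by (simp add: algebra_simps flip: mult.assoc)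
  qed
  have i5: "((c + j * p) * iT (c + j * p)) * x = 0" if H: "\<forall>a\<in>insert c F. (a * iT a) * x = 0" for x
  proof -
    have 1: "(j * iT j) * x = 0" using G(5) H by blast
    have 2: "(c * iT c) * x = 0" using H by blast
    have "(j * p) * iT (j * p) * x = j * p * (iT j * ((j * iT j) * x))" unfolding ijp using Tl2[OF j] B_idem_l[OF pB] by (simp add: mult.assoc)
    thus ?thesis unfolding O(5) using 1 2 by (simp add: algebra_simps)
  qed
  show ?thesis unfolding S good_def using O(2) G(2) c i3 i4 i5 by blast
qed

lemma good_exists: assumes "finite A" "A \<subseteq> Ts" "\<forall>a\<in>A. \<forall>b\<in>A. compatible Ts a b"
  shows "\<exists>j. good j A"
  using assms
proof (induction A rule: finite_induct)
  case empty thus ?case using good_empty by blast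
next
  case (insert c F)
  then obtain j where "good j F" by blast
  moreover have "c \<in> Ts" using insert by blast
  moreover have "idem (iT c * a) \<and> idem (a * iT c)" if "a \<in> F" for a
    using insert.prems that unfolding compatible_def by blast
  ultimately show ?case using good_insert by blast
qed


lemma idems_T: "idems Ts = Bs"
  unfolding idems_def idem_def using Ts_idem B_Ts B_idem by blast

lemma le_BB: assumes "e \<in> Bs" "f \<in> Bs" shows "nat_le Ts e f \<longleftrightarrow> e = f * e"
  unfolding nat_le_def using iT_B[OF assms(1)] B_idem[OF assms(1)] by (simp add: mult.assoc)

lemma lub_B: assumes e: "e \<in> Bs" and f: "f \<in> Bs" shows "is_lub_in Ts Bs {e, f} (e + f - e * f)"
proof -
  have jB: "e + f - e * f \<in> Bs" using B_join[OF e f] .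
  have 1: "e = (e + f - e * f) * e" using B_idem[OF e] B_comm[OF e f] B_idem_l[OF e] by (simp add: algebra_simps mult.assoc)
  have 2: "f = (e + f - e * f) * f" using B_idem[OF f] by (simp add: algebra_simps mult.assoc)
  have 3: "e + f - e * f = u * (e + f - e * f)" if "u \<in> Bs" "e = u * e" "f = u * f" for u
  proof -
    have "u * (e + f - e * f) = u * e + u * f - (u * e) * f" by (simp add: algebra_simps mult.assoc)
    thus ?thesis using that by simp
  qed
  show ?thesis unfolding is_lub_in_def using jB 1 2 3 le_BB e f jB by auto
qed

lemma glb_B: assumes e: "e \<in> Bs" and f: "f \<in> Bs" shows "is_glb_in Ts Bs {e, f} (e * f)"
proof -
  have mB: "e * f \<in> Bs" using B_mul[OF e f] .
  have 1: "e * f = e * (e * f)" using B_idem_l[OF e] by simp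
  have 2: "e * f = f * (e * f)" using B_comm[OF e f] B_idem_l[OF f] by simp
  have 3: "u = e * f * u" if "u \<in> Bs" "u = e * u" "u = f * u" for u
  proof -
    have "e * (f * u) = u" using that(2,3)[symmetric] by simp
    thus ?thesis by (simp add: mult.assoc)
  qed
  show ?thesis unfolding is_glb_in_def using mB 1 2 3 le_BB e f mB by auto
qed

lemma J_eq: assumes e: "e \<in> Bs" and f: "f \<in> Bs" shows "(THE j. is_lub_in Ts Bs {e, f} j) = e + f - e * f"
proof -
  have u: "k = e + f - e * f" if k: "is_lub_in Ts Bs {e, f} k" for k
    using le_antisym k lub_B[OF e f] B_Ts unfolding is_lub_in_def by blast
  have ex: "\<exists>!j. is_lub_in Ts Bs {e, f} j" using lub_B[OF e f] u by blast
  show ?thesis using the1_equality[OF ex lub_B[OF e f]] .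
qed

lemma M_eq: assumes e: "e \<in> Bs" and f: "f \<in> Bs" shows "(THE m. is_glb_in Ts Bs {e, f} m) = e * f"
proof -
  have u: "k = e * f" if k: "is_glb_in Ts Bs {e, f} k" for k
    using le_antisym k glb_B[OF e f] B_Ts unfolding is_glb_in_def by blast
  have ex: "\<exists>!m. is_glb_in Ts Bs {e, f} m" using glb_B[OF e f] u by blast
  show ?thesis using the1_equality[OF ex glb_B[OF e f]] .
qed

lemma BA: "idems_boolean_algebra Ts"
proof -
  define J where "J = (\<lambda>e f. THE j. is_lub_in Ts Bs {e, f} j)"
  define M where "M = (\<lambda>e f. THE m. is_glb_in Ts Bs {e, f} m)"
  have P1: "\<forall>e\<in>Bs. \<forall>f\<in>Bs. (\<exists>j. is_lub_in Ts Bs {e, f} j) \<and> (\<exists>m. is_glb_in Ts Bs {e, f} m)"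
    using lub_B glb_B by blast
  have P2: "\<forall>e\<in>Bs. \<forall>f\<in>Bs. \<forall>g\<in>Bs. M e (J f g) = J (M e f) (M e g)"
  proof (intro ballI)
    fix e f g assume e: "e \<in> Bs" and f: "f \<in> Bs" and g: "g \<in> Bs"
    have fg: "f + g - f * g \<in> Bs" using B_join[OF f g] .
    have "e * (f + g - f * g) = e * f + e * g - e * f * (e * g)"
      using B_comm_l[OF e f] B_idem_l[OF e] by (simp add: algebra_simps mult.assoc)
    thus "M e (J f g) = J (M e f) (M e g)" unfolding J_def M_def
      using J_eq[OF f g] M_eq[OF e fg] M_eq[OF e f] M_eq[OF e g] J_eq[OF B_mul[OF e f] B_mul[OF e g]] by simp
  qed
  have P3: "\<exists>bot\<in>Bs. \<exists>top\<in>Bs. (\<forall>e\<in>Bs. nat_le Ts bot e \<and> nat_le Ts e top) \<and>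
     (\<forall>e\<in>Bs. \<exists>c\<in>Bs. M e c = bot \<and> J e c = top)"
  proof (rule bexI[of _ 0], rule bexI[of _ 1], intro conjI ballI)
    fix e assume e: "e \<in> Bs"
    show "nat_le Ts 0 e" using le_BB[OF B0 e] by simp
    show "nat_le Ts e 1" using le_BB[OF e B1] by simp
    have "M e (1 - e) = 0" unfolding M_def using M_eq[OF e B_compl[OF e]] B_idem[OF e]
        by (simp add: algebra_simps)
    moreover have "J e (1 - e) = 1" unfolding J_def using J_eq[OF e B_compl[OF e]] B_idem[OF e]
        by (simp add: algebra_simps)
    ultimately show "\<exists>c\<in>Bs. M e c = 0 \<and> J e c = 1" using B_compl[OF e] by blast
  qed (use B0 B1 in auto)
  have "idems_boolean_algebra Ts = ((\<forall>e\<in>Bs. \<forall>f\<in>Bs. (\<exists>j. is_lub_in Ts Bs {e, f} j) \<and> (\<exists>m. is_glb_in Ts Bs {e, f} m)) \<and>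
         (\<forall>e\<in>Bs. \<forall>f\<in>Bs. \<forall>g\<in>Bs. M e (J f g) = J (M e f) (M e g)) \<and>
         (\<exists>bot\<in>Bs. \<exists>top\<in>Bs. (\<forall>e\<in>Bs. nat_le Ts bot e \<and> nat_le Ts e top) \<and>
            (\<forall>e\<in>Bs. \<exists>c\<in>Bs. M e c = bot \<and> J e c = top)))"
    unfolding idems_boolean_algebra_def Let_def idems_T J_def M_def ..
  thus ?thesis using P1 P2 P3 by blast
qed

lemma BIM: "is_boolean_inverse_monoid Ts"
proof -
  have Z: "\<exists>z\<in>Ts. \<forall>x\<in>Ts. z * x = z \<and> x * z = z" by (rule bexI[of _ 0]) (simp_all add: T0)
  have L: "(\<exists>j. is_lub_in Ts Ts A j) \<and>
        (\<forall>j s. is_lub_in Ts Ts A j \<and> s \<in> Ts \<longrightarrow>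
           is_lub_in Ts Ts ((\<lambda>a. s * a) ` A) (s * j) \<and>
           is_lub_in Ts Ts ((\<lambda>a. a * s) ` A) (j * s))"
    if A: "finite A \<and> A \<subseteq> Ts \<and> (\<forall>a\<in>A. \<forall>b\<in>A. compatible Ts a b)" for A
  proof -
    have A1: "finite A" "A \<subseteq> Ts" "\<forall>a\<in>A. \<forall>b\<in>A. compatible Ts a b" using A by simp_all
    obtain j0 where g: "good j0 A" using good_exists[OF A1] by (elim exE)
    have 1: "\<exists>j. is_lub_in Ts Ts A j" using good_lub[OF g] by blast
    have 2: "is_lub_in Ts Ts ((\<lambda>a. s * a) ` A) (s * j) \<and> is_lub_in Ts Ts ((\<lambda>a. a * s) ` A) (j * s)"
      if js: "is_lub_in Ts Ts A j" "s \<in> Ts" for j s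
    proof -
      have "j = j0" using lub_unique good_lub[OF g] js by blast
      thus ?thesis using good_lub[OF good_left[OF g js(2)]] good_lub[OF good_right[OF g js(2)]] by blast
    qed
    show ?thesis using 1 2 by blast
  qed
  show ?thesis unfolding is_boolean_inverse_monoid_def
  proof (intro conjI)
    show "is_inverse_monoid Ts" by (rule IMT)
    show "\<exists>z\<in>Ts. \<forall>x\<in>Ts. z * x = z \<and> x * z = z" by (rule Z)
    show "idems_boolean_algebra Ts" by (rule BA)
  qed (intro allI impI, rule L, assumption)
qed

end

theorem mainTheorem9:
  fixes S :: "'a::ring_1 set"
  assumes "0 \<in> S" and "1 \<in> S" and "is_inverse_monoid S"
  shows "\<exists>T. S \<subseteq> T \<and> is_boolean_inverse_monoid T"
proof -
  interpret IM S using assms by unfold_locales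
  show ?thesis using S_Ts BIM by blast
qed

end
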